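(* Let $\mathfrak{g}$ be a real Lie algebra endowed with a complex structure $J$ such that $J\xi\cap[\mathfrak{g},\mathfrak{g}]\neq\{0\}$, where $\xi$ denotes the center of $\mathfrak{g}$. Then $(\mathfrak{g},J)$ does not admit any Hermitian-symplectic structure.
   Context: A complex structure on a real Lie algebra $\mathfrak{g}$ is a linear map $J:\mathfrak{g}\to\mathfrak{g}$ with $J^2=-\mathrm{Id}$ and $[X,Y]-[JX,JY]+J[JX,Y]+J[X,JY]=0$ for all $X,Y$. A Hermitian-symplectic structure on $(\mathfrak{g},J)$ is a real $2$-form $\Omega\in\Lambda^2\mathfrak{g}^*$ that is closed with respect to the Chevalley–Eilenberg differential (i.e. $\Omega([X,Y],Z)+\Omega([Y,Z],X)+\Omega([Z,X],Y)=0$ for all $X,Y,Z$) and satisfies $\Omega(X,JX)>0$ for all non-zero $X\in\mathfrak{g}$. *)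

theory Defs
  imports "HOL-Analysis.Analysis"
begin

definition lie_algebra :: "('a::real_vector \<Rightarrow> 'a \<Rightarrow> 'a) \<Rightarrow> bool" where
  "lie_algebra br \<longleftrightarrow> bilinear br \<and> (\<forall>x. br x x = 0) \<and>
     (\<forall>x y z. br x (br y z) + br y (br z x) + br z (br x y) = 0)"

definition lie_center :: "('a::real_vector \<Rightarrow> 'a \<Rightarrow> 'a) \<Rightarrow> 'a set" where
  "lie_center br = {z. \<forall>x. br z x = 0}"

definition derived_algebra :: "('a::real_vector \<Rightarrow> 'a \<Rightarrow> 'a) \<Rightarrow> 'a set" where
  "derived_algebra br = span {br x y | x y. True}"

definition complex_structure :: "('a::real_vector \<Rightarrow> 'a \<Rightarrow> 'a) \<Rightarrow> ('a \<Rightarrow> 'a) \<Rightarrow> bool" where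
  "complex_structure br J \<longleftrightarrow> linear J \<and> (\<forall>x. J (J x) = - x) \<and>
     (\<forall>x y. br x y - br (J x) (J y) + J (br (J x) y) + J (br x (J y)) = 0)"

definition hermitian_symplectic :: "('a::real_vector \<Rightarrow> 'a \<Rightarrow> 'a) \<Rightarrow> ('a \<Rightarrow> 'a) \<Rightarrow> ('a \<Rightarrow> 'a \<Rightarrow> real) \<Rightarrow> bool" where
  "hermitian_symplectic br J \<Omega> \<longleftrightarrow> bilinear \<Omega> \<and> (\<forall>x y. \<Omega> x y = - \<Omega> y x) \<and>
     (\<forall>x y z. \<Omega> (br x y) z + \<Omega> (br y z) x + \<Omega> (br z x) y = 0) \<and>
     (\<forall>x. x \<noteq> 0 \<longrightarrow> \<Omega> x (J x) > 0)"

end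

theory Submission
  imports Defs
begin

lemma ex0: "(0::'b::zero) \<in> S \<Longrightarrow> S \<noteq> {0} \<Longrightarrow> \<exists>w. w \<in> S \<and> w \<noteq> 0" by blast

theorem lemma3p2:
  fixes br :: "'a::real_vector \<Rightarrow> 'a \<Rightarrow> 'a" and J :: "'a \<Rightarrow> 'a"
  assumes "lie_algebra br"
    and "complex_structure br J"
    and "J ` lie_center br \<inter> derived_algebra br \<noteq> {0}"
  shows "\<not> (\<exists>\<Omega>. hermitian_symplectic br J \<Omega>)"
proof
  assume "\<exists>\<Omega>. hermitian_symplectic br J \<Omega>"
  then obtain \<Omega> where H: "hermitian_symplectic br J \<Omega>" by blast
  have lin: "linear J" using assms(2) by (simp add: complex_structure_def)
  have J0: "J 0 = 0" using lin linear_0 by blast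
  have z0: "0 \<in> lie_center br"
  proof -
    have "\<And>x. linear (\<lambda>y. br y x)" using assms(1) unfolding lie_algebra_def bilinear_def by blast
    then have "\<And>x. br 0 x = 0" using linear_0 by fastforce
    then show ?thesis unfolding lie_center_def by blast
  qed
  have d0: "0 \<in> derived_algebra br" unfolding derived_algebra_def by (simp add: span_zero)
  have "0 \<in> J ` lie_center br \<inter> derived_algebra br" using J0 z0 d0 by (metis IntI image_eqI)
  then obtain w where "w \<in> J ` lie_center br \<inter> derived_algebra br" "w \<noteq> 0"
    using assms(3) ex0 by metis
  then have w: "w \<in> J ` lie_center br" "w \<in> derived_algebra br" "w \<noteq> 0" by auto
  then obtain z where z: "z \<in> lie_center br" "w = J z" by blast
  have zc: "\<And>x. br z x = 0" using z(1) by (simp add: lie_center_def)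
  have bil: "bilinear \<Omega>" and anti: "\<And>x y. \<Omega> x y = - \<Omega> y x"
    and cl: "\<And>x y c. \<Omega> (br x y) c + \<Omega> (br y c) x + \<Omega> (br c x) y = 0"
    and pos: "\<And>x. x \<noteq> 0 \<Longrightarrow> \<Omega> x (J x) > 0"
  proof -
    have HH: "bilinear \<Omega> \<and> (\<forall>x y. \<Omega> x y = - \<Omega> y x) \<and>
     (\<forall>x y z. \<Omega> (br x y) z + \<Omega> (br y z) x + \<Omega> (br z x) y = 0) \<and>
     (\<forall>x. x \<noteq> 0 \<longrightarrow> \<Omega> x (J x) > 0)" using H unfolding hermitian_symplectic_def .
    show "bilinear \<Omega>" using HH by (rule conjunct1)
    show "\<And>x y. \<Omega> x y = - \<Omega> y x" by (rule HH[THEN conjunct2, THEN conjunct1, rule_format])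
    show "\<And>x y c. \<Omega> (br x y) c + \<Omega> (br y c) x + \<Omega> (br c x) y = 0"
      by (rule HH[THEN conjunct2, THEN conjunct2, THEN conjunct1, rule_format])
    show "\<And>x. x \<noteq> 0 \<Longrightarrow> \<Omega> x (J x) > 0"
      using HH[THEN conjunct2, THEN conjunct2, THEN conjunct2] by blast
  qed
  have linl: "linear (\<lambda>x. \<Omega> x z)" using bil by (simp add: bilinear_def)
  have brz: "\<And>y. br y z = 0"
  proof -
    fix y
    have b: "bilinear br" and al: "\<And>x. br x x = 0" using assms(1) by (auto simp: lie_algebra_def)
    have l1: "linear (\<lambda>x. br x (y + z))" and l2: "linear (br y)" and l3: "linear (br z)"
      using b by (auto simp: bilinear_def)
    have "0 = br (y + z) (y + z)" using al by simp
    also have "\<dots> = br y (y + z) + br z (y + z)" using linear_add[OF l1, of y z] by simp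
    also have "\<dots> = br y z" using linear_add[OF l2, of y z] linear_add[OF l3, of y z] al zc by simp
    finally show "br y z = 0" by simp
  qed
  have "\<And>x y. \<Omega> (br x y) z = 0"
  proof -
    fix x y
    have "\<Omega> (br y z) x = 0" "\<Omega> (br z x) y = 0"
      proof -
      have "linear (\<lambda>u. \<Omega> u x)" "linear (\<lambda>u. \<Omega> u y)" using bil unfolding bilinear_def by blast+
      then have "\<Omega> 0 x = 0" "\<Omega> 0 y = 0" using linear_0 by fastforce+
      then show "\<Omega> (br y z) x = 0" "\<Omega> (br z x) y = 0" using brz zc by simp_all
    qed
    then show "\<Omega> (br x y) z = 0" using cl[of x y z] by simp
  qed
  hence "\<forall>v \<in> derived_algebra br. \<Omega> v z = 0"
    unfolding derived_algebra_def
  proof (intro ballI)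
    fix v assume A: "\<And>x y. \<Omega> (br x y) z = 0" and v: "v \<in> span {br x y |x y. True}"
    show "\<Omega> v z = 0"
      by (rule real_vector.linear_eq_0_on_span[OF linl _ v]) (use A in auto)
  qed
  hence "\<Omega> w z = 0" using w(2) by blast
  hence "\<Omega> (J z) z = 0" using z(2) by simp
  moreover have "z \<noteq> 0" using w z J0 by auto
  ultimately show False using pos[of z] anti[of z "J z"] by simp
qed

end
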